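(* Let $\vec X,\vec Y$ be jointly Gaussian (finite-dimensional) random vectors. Then for any vectors $\vec x,\vec y$, $$\mathbb{P}\Big(\min_i(X_i-x_i)\le0\ \Big|\ \vec Y=\vec y\Big)\le\frac{\mathbb{P}\big(\min_i(X_i-x_i)\le0\big)}{\min_i\mathbb{P}\big(\mathbb{E}[X_i\mid\vec Y]\le\mathbb{E}[X_i\mid\vec Y=\vec y]\big)}.$$ In particular, if $\vec Y$ is centered, then $\mathbb{P}(\min_i(X_i-x_i)\le0)\ge\frac12\mathbb{P}(\min_i(X_i-x_i)\le0\mid\vec Y=\vec0)$. *)

theory Defs
  imports "HOL-Probability.Probability"
begin

definition real_gaussian :: "'a measure \<Rightarrow> ('a \<Rightarrow> real) \<Rightarrow> bool" where
  "real_gaussian M f \<longleftrightarrow> f \<in> borel_measurable M \<and>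
     ((\<exists>m. AE \<omega> in M. f \<omega> = m) \<or>
      (\<exists>m \<sigma>. \<sigma> > 0 \<and> distributed M lborel f (normal_density m \<sigma>)))"

text \<open>A (finite-dimensional) Gaussian random vector: every linear functional is Gaussian.
  Jointly Gaussian vectors X, Y means the pair (X,Y) is a Gaussian vector.\<close>
definition gaussian_vector :: "'a measure \<Rightarrow> ('a \<Rightarrow> 'b::euclidean_space) \<Rightarrow> bool" where
  "gaussian_vector M Z \<longleftrightarrow> Z \<in> borel_measurable M \<and>
     (\<forall>c::'b. real_gaussian M (\<lambda>\<omega>. c \<bullet> Z \<omega>))"

text \<open>Gaussian conditioning of X on Y: X = a + B Y + R almost surely, with R independent of Y.
  Then E[X | Y] = a + B Y, E[X | Y = y] = a + B y, and the conditional law of X given Y = y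
  is the law of a + B y + R.\<close>
definition gaussian_regression ::
  "'a measure \<Rightarrow> ('a \<Rightarrow> real^'n) \<Rightarrow> ('a \<Rightarrow> real^'m) \<Rightarrow> real^'n \<Rightarrow> real^'m^'n \<Rightarrow> ('a \<Rightarrow> real^'n) \<Rightarrow> bool"
  where
  "gaussian_regression M X Y a B R \<longleftrightarrow>
     R \<in> borel_measurable M \<and>
     prob_space.indep_set M
       {R -` A \<inter> space M | A. A \<in> sets (borel :: (real^'n) measure)}
       {Y -` A \<inter> space M | A. A \<in> sets (borel :: (real^'m) measure)} \<and>
     (AE \<omega> in M. X \<omega> = a + B *v Y \<omega> + R \<omega>)"

definition gcond_exp :: "real^'n \<Rightarrow> real^'m^'n \<Rightarrow> ('a \<Rightarrow> real^'m) \<Rightarrow> 'a \<Rightarrow> real^'n" where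
  "gcond_exp a B Y \<omega> = a + B *v Y \<omega>"

definition gcond_exp_at :: "real^'n \<Rightarrow> real^'m^'n \<Rightarrow> real^'m \<Rightarrow> real^'n" where
  "gcond_exp_at a B y = a + B *v y"

definition gcond_prob ::
  "'a measure \<Rightarrow> real^'n \<Rightarrow> real^'m^'n \<Rightarrow> ('a \<Rightarrow> real^'n) \<Rightarrow> real^'m \<Rightarrow> (real^'n \<Rightarrow> bool) \<Rightarrow> real" where
  "gcond_prob M a B R y P = measure M {\<omega> \<in> space M. P (gcond_exp_at a B y + R \<omega>)}"

end

theory Submission
  imports Defs
begin
lemma gauss_integrable:
  assumes P: "prob_space M" and g: "real_gaussian M f"
  shows "integrable M f"
proof -
  interpret prob_space M by fact
  have fm: "f \<in> borel_measurable M" using g by (simp add: real_gaussian_def)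
  from g consider (c) m where "AE \<omega> in M. f \<omega> = m"
    | (n) m \<sigma> where "\<sigma> > 0" "distributed M lborel f (normal_density m \<sigma>)"
    unfolding real_gaussian_def by blast
  then show ?thesis
  proof cases
    case c
    have "integrable M (\<lambda>_. m)" by simp
    moreover have "AE \<omega> in M. m = f \<omega>" using c by auto
    ultimately show ?thesis by (rule integrable_cong_AE_imp[OF _ fm])
  next
    case n
    show ?thesis
      by (rule distributed_integrable_var[OF n(2)]) (auto simp: integrable_normal_moment_nz_1 n(1))
  qed
qed

lemma gauss_half:
  assumes P: "prob_space M" and g: "real_gaussian M f" and z: "integral\<^sup>L M f = 0"
  shows "measure M {\<omega> \<in> space M. f \<omega> \<le> 0} \<ge> 1/2"
proof -
  interpret prob_space M by fact
  have fm[measurable]: "f \<in> borel_measurable M" using g by (simp add: real_gaussian_def)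
  from g consider (c) m where "AE \<omega> in M. f \<omega> = m"
    | (n) m \<sigma> where "\<sigma> > 0" "distributed M lborel f (normal_density m \<sigma>)"
    unfolding real_gaussian_def by blast
  then show ?thesis
  proof cases
    case c
    have "integral\<^sup>L M f = integral\<^sup>L M (\<lambda>_. m)" using c by (intro integral_cong_AE) auto
    also have "\<dots> = m" using prob_space.prob_space[OF P] by (simp del: prob_space)
    finally have "m = 0" using z by simp
    then have "AE \<omega> in M. f \<omega> \<le> 0" using c by (auto elim: AE_mp)
    then have "measure M {\<omega> \<in> space M. f \<omega> \<le> 0} = 1"
      by (subst prob_Collect_eq_1) auto
    then show ?thesis by simp
  next
    case n
    have "m = 0" using normal_distributed_expectation[OF n] z prob_space.prob_space[OF P] by simp
    have d2: "distributed M lborel (\<lambda>\<omega>. 0 + (-1) * f \<omega>) (normal_density 0 \<sigma>)"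
      using normal_density_affine[OF n(2) n(1), of "-1" 0] \<open>m = 0\<close> by simp
    have "distr M lborel f = distr M lborel (\<lambda>\<omega>. 0 + (-1) * f \<omega>)"
      using distributed_distr_eq_density[OF n(2)] distributed_distr_eq_density[OF d2] \<open>m = 0\<close> by simp
    then have "measure (distr M lborel f) {..0} = measure (distr M lborel (\<lambda>\<omega>. 0 + (-1) * f \<omega>)) {..0}"
      by simp
    then have e: "measure M {\<omega> \<in> space M. f \<omega> \<le> 0} = measure M {\<omega> \<in> space M. f \<omega> \<ge> 0}"
      by (subst (asm) (1 2) measure_distr) (auto simp: vimage_def Int_def conj_commute)
    have "1 = measure M ({\<omega> \<in> space M. f \<omega> \<le> 0} \<union> {\<omega> \<in> space M. f \<omega> \<ge> 0})"
      by (subst prob_space.prob_space[OF P, symmetric]) (rule arg_cong[where f="measure M"], auto)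
    also have "\<dots> \<le> measure M {\<omega> \<in> space M. f \<omega> \<le> 0} + measure M {\<omega> \<in> space M. f \<omega> \<ge> 0}"
      using finite_measure_subadditive_finite[of UNIV "\<lambda>b. if b then {\<omega> \<in> space M. f \<omega> \<le> 0} else {\<omega> \<in> space M. f \<omega> \<ge> 0}"] by (simp add: UNIV_bool Un_commute)
    finally show ?thesis using e by simp
  qed
qed

lemma min_le0_iff:
  fixes f :: "'n::finite \<Rightarrow> real"
  shows "Min (range f) \<le> 0 \<longleftrightarrow> (\<exists>i. f i \<le> 0)"
  by (subst Min_le_iff) auto

lemma mv_comp: "(B *v v) $ i = B $ i \<bullet> v"
  by (simp add: matrix_mult_dot)

lemma main_ineq:
  fixes M :: "'a measure"
    and X :: "'a \<Rightarrow> real^'n" and Y :: "'a \<Rightarrow> real^'m"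
    and a :: "real^'n" and B :: "real^'m^'n" and R :: "'a \<Rightarrow> real^'n"
    and x :: "real^'n" and y :: "real^'m"
  assumes P: "prob_space M"
    and Xm[measurable]: "X \<in> borel_measurable M" and Ym[measurable]: "Y \<in> borel_measurable M"
    and GR: "gaussian_regression M X Y a B R"
  shows "Min (range (\<lambda>i. measure M {\<omega> \<in> space M. gcond_exp a B Y \<omega> $ i \<le> gcond_exp_at a B y $ i}))
          * gcond_prob M a B R y (\<lambda>v. Min (range (\<lambda>i. v $ i - x $ i)) \<le> 0)
        \<le> measure M {\<omega> \<in> space M. Min (range (\<lambda>i. X \<omega> $ i - x $ i)) \<le> 0}"
proof -
  interpret prob_space M by fact
  have Rm[measurable]: "R \<in> borel_measurable M" using GR by (simp add: gaussian_regression_def)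
  have ind: "indep_set {R -` A \<inter> space M | A. A \<in> sets (borel :: (real^'n) measure)}
       {Y -` A \<inter> space M | A. A \<in> sets (borel :: (real^'m) measure)}"
    using GR by (simp add: gaussian_regression_def)
  have AEX: "AE \<omega> in M. X \<omega> = a + B *v Y \<omega> + R \<omega>"
    using GR by (simp add: gaussian_regression_def)
  define v0 where "v0 = gcond_exp_at a B y"
  define c where "c i r \<longleftrightarrow> (v0 + r) $ i \<le> x $ i" for i r
  define S where "S i = {r. c i r \<and> (\<forall>j. to_nat j < to_nat i \<longrightarrow> \<not> c j r)}" for i
  define T where "T i = {v. (a + B *v v) $ i \<le> v0 $ i}" for i
  define p where "p i = measure M {\<omega> \<in> space M. gcond_exp a B Y \<omega> $ i \<le> v0 $ i}" for i
  define q where "q i = measure M (R -` S i \<inter> space M)" for i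
  have Sb: "S i \<in> sets borel" for i
    unfolding S_def c_def by measurable
  have Tb: "T i \<in> sets borel" for i
    unfolding T_def by (simp add: mv_comp)
  have Rev: "R -` S i \<inter> space M \<in> {R -` A \<inter> space M | A. A \<in> sets (borel :: (real^'n) measure)}" for i
    using Sb by blast
  have Yev: "Y -` T i \<inter> space M \<in> {Y -` A \<inter> space M | A. A \<in> sets (borel :: (real^'m) measure)}" for i
    using Tb by blast
  have pT: "p i = measure M (Y -` T i \<inter> space M)" for i
    unfolding p_def T_def gcond_exp_def by (rule arg_cong[where f="measure M"]) auto
  define E where "E i = (R -` S i \<inter> space M) \<inter> (Y -` T i \<inter> space M)" for i
  have Eprob: "measure M (E i) = q i * p i" for i
    unfolding E_def q_def pT by (rule indep_setD[OF ind Rev Yev])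
  have Eev: "E i \<in> sets M" for i
    unfolding E_def using Sb Tb by measurable
  have Sdisj: "S i \<inter> S j = {}" if "i \<noteq> j" for i j
  proof -
    have "to_nat i \<noteq> to_nat j" using that by simp
    then have "to_nat i < to_nat j \<or> to_nat j < to_nat i" by arith
    then show ?thesis unfolding S_def by blast
  qed
  have Sun: "{r. \<exists>i. c i r} = (\<Union>i. S i)"
  proof (intro set_eqI iffI)
    fix r assume "r \<in> {r. \<exists>i. c i r}"
    then obtain k where "c k r" by auto
    from ex_has_least_nat[of "\<lambda>i. c i r" k to_nat, OF this]
    obtain i where "c i r" "\<forall>j. c j r \<longrightarrow> to_nat i \<le> to_nat j" by blast
    then have "r \<in> S i" unfolding S_def by (auto simp: not_less[symmetric])
    then show "r \<in> (\<Union>i. S i)" by blast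
  qed (auto simp: S_def)
  have gp: "gcond_prob M a B R y (\<lambda>v. Min (range (\<lambda>i. v $ i - x $ i)) \<le> 0) = (\<Sum>i\<in>UNIV. q i)"
  proof -
    have "gcond_prob M a B R y (\<lambda>v. Min (range (\<lambda>i. v $ i - x $ i)) \<le> 0)
        = measure M (\<Union>i. R -` S i \<inter> space M)"
      unfolding gcond_prob_def min_le0_iff v0_def[symmetric]
    proof (rule arg_cong[where f="measure M"])
      have Sun': "\<forall>r. (\<exists>i. (v0 + r) $ i - x $ i \<le> 0) \<longleftrightarrow> (\<exists>i. r \<in> S i)"
        using Sun unfolding c_def set_eq_iff by simp
      show "{\<omega> \<in> space M. \<exists>i. (v0 + R \<omega>) $ i - x $ i \<le> 0} = (\<Union>i. R -` S i \<inter> space M)"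
        using Sun' by blast
    qed
    also have "\<dots> = (\<Sum>i\<in>UNIV. q i)" unfolding q_def
      by (rule finite_measure_finite_Union) (use Sb Sdisj in \<open>auto simp: disjoint_family_on_def\<close>)
    finally show ?thesis .
  qed
  have Xset: "{\<omega> \<in> space M. Min (range (\<lambda>i. X \<omega> $ i - x $ i)) \<le> 0} \<in> sets M"
    unfolding min_le0_iff by measurable
  have "(\<Sum>i\<in>UNIV. measure M (E i)) = measure M (\<Union>i. E i)"
    by (rule finite_measure_finite_Union[symmetric]) (use Eev Sdisj in \<open>auto simp: disjoint_family_on_def E_def\<close>)
  also have "\<dots> \<le> measure M {\<omega> \<in> space M. Min (range (\<lambda>i. X \<omega> $ i - x $ i)) \<le> 0}"
  proof (rule finite_measure_mono_AE[OF _ Xset])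
    show "AE \<omega> in M. \<omega> \<in> (\<Union>i. E i) \<longrightarrow> \<omega> \<in> {\<omega> \<in> space M. Min (range (\<lambda>i. X \<omega> $ i - x $ i)) \<le> 0}"
      using AEX
    proof (rule AE_mp, intro AE_I2 impI)
      fix \<omega> assume \<omega>: "\<omega> \<in> space M" and eq: "X \<omega> = a + B *v Y \<omega> + R \<omega>" and "\<omega> \<in> (\<Union>i. E i)"
      then obtain i where "R \<omega> \<in> S i" "Y \<omega> \<in> T i" unfolding E_def by auto
      then have "c i (R \<omega>)" "(a + B *v Y \<omega>) $ i \<le> v0 $ i" unfolding S_def T_def by auto
      then have "X \<omega> $ i - x $ i \<le> 0" unfolding eq c_def by simp
      then show "\<omega> \<in> {\<omega> \<in> space M. Min (range (\<lambda>i. X \<omega> $ i - x $ i)) \<le> 0}"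
        using \<omega> unfolding min_le0_iff by auto
    qed
  qed
  finally have A: "(\<Sum>i\<in>UNIV. q i * p i) \<le> measure M {\<omega> \<in> space M. Min (range (\<lambda>i. X \<omega> $ i - x $ i)) \<le> 0}"
    using Eprob by simp
  have "Min (range p) * (\<Sum>i\<in>UNIV. q i) = (\<Sum>i\<in>UNIV. q i * Min (range p))"
    by (simp add: sum_distrib_right mult.commute)
  also have "\<dots> \<le> (\<Sum>i\<in>UNIV. q i * p i)"
    by (intro sum_mono mult_left_mono) (auto simp: q_def)
  finally show ?thesis using A unfolding gp p_def v0_def by simp
qed
theorem lemma2p1:
  fixes M :: "'a measure"
    and X :: "'a \<Rightarrow> real^'n" and Y :: "'a \<Rightarrow> real^'m"
    and a :: "real^'n" and B :: "real^'m^'n" and R :: "'a \<Rightarrow> real^'n"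
    and x :: "real^'n" and y :: "real^'m"
  assumes "prob_space M"
    and "X \<in> borel_measurable M" and "Y \<in> borel_measurable M"
    and "gaussian_vector M (\<lambda>\<omega>. (X \<omega>, Y \<omega>))"
    and "gaussian_regression M X Y a B R"
  shows
    "(Min (range (\<lambda>i. measure M {\<omega> \<in> space M. gcond_exp a B Y \<omega> $ i \<le> gcond_exp_at a B y $ i})) > 0
      \<longrightarrow> gcond_prob M a B R y (\<lambda>v. Min (range (\<lambda>i. v $ i - x $ i)) \<le> 0)
          \<le> measure M {\<omega> \<in> space M. Min (range (\<lambda>i. X \<omega> $ i - x $ i)) \<le> 0}
            / Min (range (\<lambda>i. measure M {\<omega> \<in> space M. gcond_exp a B Y \<omega> $ i \<le> gcond_exp_at a B y $ i})))
     \<and> ((\<forall>j. integral\<^sup>L M (\<lambda>\<omega>. Y \<omega> $ j) = 0)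
      \<longrightarrow> measure M {\<omega> \<in> space M. Min (range (\<lambda>i. X \<omega> $ i - x $ i)) \<le> 0}
          \<ge> 1/2 * gcond_prob M a B R 0 (\<lambda>v. Min (range (\<lambda>i. v $ i - x $ i)) \<le> 0))"
proof (intro conjI impI)
  note mi = main_ineq[OF assms(1,2,3,5)]
  assume "Min (range (\<lambda>i. measure M {\<omega> \<in> space M. gcond_exp a B Y \<omega> $ i \<le> gcond_exp_at a B y $ i})) > 0"
  then show "gcond_prob M a B R y (\<lambda>v. Min (range (\<lambda>i. v $ i - x $ i)) \<le> 0)
          \<le> measure M {\<omega> \<in> space M. Min (range (\<lambda>i. X \<omega> $ i - x $ i)) \<le> 0}
            / Min (range (\<lambda>i. measure M {\<omega> \<in> space M. gcond_exp a B Y \<omega> $ i \<le> gcond_exp_at a B y $ i}))"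
    using mi[of y x] by (simp add: pos_le_divide_eq mult.commute)
next
  note mi = main_ineq[OF assms(1,2,3,5)]
  assume Y0: "\<forall>j. integral\<^sup>L M (\<lambda>\<omega>. Y \<omega> $ j) = 0"
  have gv: "real_gaussian M (\<lambda>\<omega>. c \<bullet> X \<omega> + d \<bullet> Y \<omega>)" for c d
    using assms(4) by (simp add: gaussian_vector_def)
  have Yint: "integrable M (\<lambda>\<omega>. Y \<omega> $ j)" for j
  proof -
    have "real_gaussian M (\<lambda>\<omega>. 0 \<bullet> X \<omega> + axis j 1 \<bullet> Y \<omega>)" by (rule gv)
    then have "real_gaussian M (\<lambda>\<omega>. Y \<omega> $ j)" by (simp add: inner_axis inner_commute)
    then show ?thesis by (rule gauss_integrable[OF assms(1)])
  qed
  have half: "measure M {\<omega> \<in> space M. gcond_exp a B Y \<omega> $ i \<le> gcond_exp_at a B 0 $ i} \<ge> 1/2" for i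
  proof -
    have g: "real_gaussian M (\<lambda>\<omega>. B $ i \<bullet> Y \<omega>)"
      using gv[of 0 "B $ i"] by simp
    have "integral\<^sup>L M (\<lambda>\<omega>. B $ i \<bullet> Y \<omega>) = (\<Sum>j\<in>UNIV. B $ i $ j * integral\<^sup>L M (\<lambda>\<omega>. Y \<omega> $ j))"
      unfolding inner_vec_def by (simp add: Yint)
    also have "\<dots> = 0" using Y0 by simp
    finally have "measure M {\<omega> \<in> space M. B $ i \<bullet> Y \<omega> \<le> 0} \<ge> 1/2"
      by (rule gauss_half[OF assms(1) g])
    then show ?thesis by (simp add: gcond_exp_def gcond_exp_at_def mv_comp)
  qed
  have mh: "Min (range (\<lambda>i. measure M {\<omega> \<in> space M. gcond_exp a B Y \<omega> $ i \<le> gcond_exp_at a B 0 $ i})) \<ge> 1/2"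
    using half by (subst Min_ge_iff) auto
  have gp0: "gcond_prob M a B R 0 (\<lambda>v. Min (range (\<lambda>i. v $ i - x $ i)) \<le> 0) \<ge> 0"
    by (simp add: gcond_prob_def)
  show "measure M {\<omega> \<in> space M. Min (range (\<lambda>i. X \<omega> $ i - x $ i)) \<le> 0}
          \<ge> 1/2 * gcond_prob M a B R 0 (\<lambda>v. Min (range (\<lambda>i. v $ i - x $ i)) \<le> 0)"
    using mi[of 0 x] mult_right_mono[OF mh gp0] by linarith
qed

end
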